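(* Under the hypotheses of Theorem 3 (with $F_1,F_2$ defined from the given code and from $\beta_1,\beta_2,\lambda_1,\lambda_2,\nu_1$ satisfying $\Sigma_1\le1$, $\Sigma_2\le1$ everywhere), for all $\gamma_1,\gamma_2>0$, $$\epsilon_1\ge\mathbb P[F_1\ge\log M_1+\gamma_1]-e^{-\gamma_1},\qquad \epsilon_2\ge\mathbb P[F_2\ge\log M_2+\gamma_2]-e^{-\gamma_2}.$$
   Context: Setting: $X$ with law $P_X$ on $\mathcal X$; measurable distortion measures $\mathsf d_1\colon\mathcal X\times\mathcal Y_1\to[0,\infty)$, $\mathsf d_2\colon\mathcal X\times\mathcal Y_2\to[0,\infty)$ (all $\sigma$-algebras containing singletons). For measurable $\beta_1\colon\mathcal X\to(0,\infty)$, $\beta_2\colon\mathcal X\times\mathcal Y_1\to(0,\infty)$ and $\lambda_1,\lambda_2,\nu_1\ge0$, $\Sigma_2(y_1,y_2)=\mathbb E\big[\exp(-\frac{\lambda_1}{1+\nu_1}\mathsf d_1(X,y_1)-\lambda_2\mathsf d_2(X,y_2))/(\beta_1(X)\beta_2(X|y_1)^{\nu_1/(1+\nu_1)})\big]$ and $\Sigma_1(y_1)=\mathbb E\big[\exp(-\frac{\lambda_1}{1+\nu_1}\mathsf d_1(X,y_1))\beta_2(X|y_1)^{1/(1+\nu_1)}/\beta_1(X)\big]$. An $(M_1,M_2,d_1,d_2,\epsilon_1,\epsilon_2)$ code: possibly randomized encoders $P_{W_1|X}$ into $\{1,\dots,M_1\}$, $P_{W_2|XW_1}$ into $\{1,\dots,\lfloor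 M_2/M_1\rfloor\}$ and decoders $P_{Y_1|W_1}$, $P_{Y_2|W_1W_2}$, with $\mathcal A_1=\{\mathsf d_1(X,Y_1)\le d_1\}$, $\mathcal A_2=\mathcal A_1\cap\{\mathsf d_2(X,Y_2)\le d_2\}$, $\mathbb P[\mathcal A_1^c]\le\epsilon_1$, $\mathbb P[\mathcal A_2^c]\le\epsilon_2$. $F_1=\log\frac{\beta_2(X|Y_1)^{1/(1+\nu_1)}}{\beta_1(X)}-\frac{\lambda_1}{1+\nu_1}d_1$, $F_2=\log\frac{\beta_2(X|Y_1)^{-\nu_1/(1+\nu_1)}}{\beta_1(X)}-\frac{\lambda_1}{1+\nu_1}d_1-\lambda_2d_2$. *)

theory Defs
  imports "HOL-Probability.Probability"
begin

definition Sigma1 ::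
  "'x measure \<Rightarrow> ('x \<Rightarrow> 'y1 \<Rightarrow> real) \<Rightarrow> ('x \<Rightarrow> real) \<Rightarrow> ('x \<Rightarrow> 'y1 \<Rightarrow> real)
   \<Rightarrow> real \<Rightarrow> real \<Rightarrow> 'y1 \<Rightarrow> ennreal" where
  "Sigma1 MX dist1 \<beta>1 \<beta>2 lam1 \<nu>1 y1 =
     (\<integral>\<^sup>+ x. ennreal (exp (- (lam1 / (1 + \<nu>1)) * dist1 x y1)
                   * \<beta>2 x y1 powr (1 / (1 + \<nu>1)) / \<beta>1 x) \<partial>MX)"

definition Sigma2 ::
  "'x measure \<Rightarrow> ('x \<Rightarrow> 'y1 \<Rightarrow> real) \<Rightarrow> ('x \<Rightarrow> 'y2 \<Rightarrow> real) \<Rightarrow> ('x \<Rightarrow> real)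
   \<Rightarrow> ('x \<Rightarrow> 'y1 \<Rightarrow> real) \<Rightarrow> real \<Rightarrow> real \<Rightarrow> real \<Rightarrow> 'y1 \<Rightarrow> 'y2 \<Rightarrow> ennreal" where
  "Sigma2 MX dist1 dist2 \<beta>1 \<beta>2 lam1 lam2 \<nu>1 y1 y2 =
     (\<integral>\<^sup>+ x. ennreal (exp (- (lam1 / (1 + \<nu>1)) * dist1 x y1 - lam2 * dist2 x y2)
                   / (\<beta>1 x * \<beta>2 x y1 powr (\<nu>1 / (1 + \<nu>1)))) \<partial>MX)"

text \<open>Joint law of (X, Y1, Y2) induced by the source law MX, the (randomized) encoders
  e1 = P_{W1|X}, e2 = P_{W2|X W1} and decoders g1 = P_{Y1|W1}, g2 = P_{Y2|W1 W2}.\<close>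

definition joint_law ::
  "'x measure \<Rightarrow> 'y1 measure \<Rightarrow> 'y2 measure \<Rightarrow> ('x \<Rightarrow> nat measure) \<Rightarrow> ('x \<times> nat \<Rightarrow> nat measure)
   \<Rightarrow> (nat \<Rightarrow> 'y1 measure) \<Rightarrow> (nat \<times> nat \<Rightarrow> 'y2 measure) \<Rightarrow> ('x \<times> 'y1 \<times> 'y2) measure" where
  "joint_law MX MY1 MY2 e1 e2 g1 g2 =
     MX \<bind> (\<lambda>x. e1 x \<bind> (\<lambda>w1. e2 (x, w1) \<bind> (\<lambda>w2. g1 w1 \<bind> (\<lambda>y1. g2 (w1, w2) \<bind>
       (\<lambda>y2. return (MX \<Otimes>\<^sub>M MY1 \<Otimes>\<^sub>M MY2) (x, y1, y2))))))"

definition is_code ::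
  "'x measure \<Rightarrow> 'y1 measure \<Rightarrow> 'y2 measure \<Rightarrow> ('x \<Rightarrow> 'y1 \<Rightarrow> real) \<Rightarrow> ('x \<Rightarrow> 'y2 \<Rightarrow> real)
   \<Rightarrow> nat \<Rightarrow> nat \<Rightarrow> real \<Rightarrow> real \<Rightarrow> real \<Rightarrow> real
   \<Rightarrow> ('x \<Rightarrow> nat measure) \<Rightarrow> ('x \<times> nat \<Rightarrow> nat measure)
   \<Rightarrow> (nat \<Rightarrow> 'y1 measure) \<Rightarrow> (nat \<times> nat \<Rightarrow> 'y2 measure) \<Rightarrow> bool" where
  "is_code MX MY1 MY2 dist1 dist2 M1 M2 d1 d2 \<epsilon>1 \<epsilon>2 e1 e2 g1 g2 \<longleftrightarrow>
     e1 \<in> MX \<rightarrow>\<^sub>M prob_algebra (count_space {1..M1}) \<and>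
     e2 \<in> MX \<Otimes>\<^sub>M count_space {1..M1} \<rightarrow>\<^sub>M prob_algebra (count_space {1..M2 div M1}) \<and>
     g1 \<in> count_space {1..M1} \<rightarrow>\<^sub>M prob_algebra MY1 \<and>
     g2 \<in> count_space {1..M1} \<Otimes>\<^sub>M count_space {1..M2 div M1} \<rightarrow>\<^sub>M prob_algebra MY2 \<and>
     (let P = joint_law MX MY1 MY2 e1 e2 g1 g2 in
        measure P {(x, y1, y2) \<in> space P. \<not> dist1 x y1 \<le> d1} \<le> \<epsilon>1 \<and>
        measure P {(x, y1, y2) \<in> space P. \<not> (dist1 x y1 \<le> d1 \<and> dist2 x y2 \<le> d2)} \<le> \<epsilon>2)"

end

theory Submission
  imports Defs
begin

lemma joint_nn:
  assumes [measurable]: "e1 \<in> MX \<rightarrow>\<^sub>M subprob_algebra C1"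
   "e2 \<in> MX \<Otimes>\<^sub>M C1 \<rightarrow>\<^sub>M subprob_algebra C2"
   "g1 \<in> C1 \<rightarrow>\<^sub>M subprob_algebra MY1"
   "g2 \<in> C1 \<Otimes>\<^sub>M C2 \<rightarrow>\<^sub>M subprob_algebra MY2"
   and f[measurable]: "f \<in> borel_measurable (MX \<Otimes>\<^sub>M MY1 \<Otimes>\<^sub>M MY2)"
  shows "(\<integral>\<^sup>+z. f z \<partial>joint_law MX MY1 MY2 e1 e2 g1 g2) =
    (\<integral>\<^sup>+x. \<integral>\<^sup>+w1. \<integral>\<^sup>+w2. \<integral>\<^sup>+y1. \<integral>\<^sup>+y2. f (x,y1,y2) \<partial>g2 (w1,w2) \<partial>g1 w1 \<partial>e2 (x,w1) \<partial>e1 x \<partial>MX)"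
proof -
  let ?S = "MX \<Otimes>\<^sub>M MY1 \<Otimes>\<^sub>M MY2"
  have sk: "\<And>K M N x. K \<in> M \<rightarrow>\<^sub>M subprob_algebra N \<Longrightarrow> x \<in> space M \<Longrightarrow> sets (K x) = sets N"
    by (rule sets_kernel)
  show ?thesis
  unfolding joint_law_def
  proof (subst nn_integral_bind[OF f], measurable, intro nn_integral_cong)
    fix x assume x[measurable]: "x \<in> space MX"
    have s1: "sets (e1 x) = sets C1" using sk[OF assms(1) x] .
    show "(\<integral>\<^sup>+z. f z \<partial>(e1 x \<bind> (\<lambda>w1. e2 (x, w1) \<bind> (\<lambda>w2. g1 w1 \<bind> (\<lambda>y1. g2 (w1, w2) \<bind>
       (\<lambda>y2. return ?S (x, y1, y2))))))) = 
      (\<integral>\<^sup>+w1. \<integral>\<^sup>+w2. \<integral>\<^sup>+y1. \<integral>\<^sup>+y2. f (x,y1,y2) \<partial>g2 (w1,w2) \<partial>g1 w1 \<partial>e2 (x,w1) \<partial>e1 x)"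
    proof (subst nn_integral_bind[OF f], subst measurable_cong_sets[OF s1 refl], measurable, intro nn_integral_cong)
      fix w1 assume "w1 \<in> space (e1 x)"
      hence w1[measurable]: "w1 \<in> space C1" using sets_eq_imp_space_eq[OF s1] by simp
      have xw: "(x, w1) \<in> space (MX \<Otimes>\<^sub>M C1)" using x w1 by (simp add: space_pair_measure)
      have s2: "sets (e2 (x,w1)) = sets C2" using sk[OF assms(2) xw] .
      have s3: "sets (g1 w1) = sets MY1" using sk[OF assms(3) w1] .
      show "(\<integral>\<^sup>+z. f z \<partial>(e2 (x, w1) \<bind> (\<lambda>w2. g1 w1 \<bind> (\<lambda>y1. g2 (w1, w2) \<bind>
       (\<lambda>y2. return ?S (x, y1, y2)))))) = 
      (\<integral>\<^sup>+w2. \<integral>\<^sup>+y1. \<integral>\<^sup>+y2. f (x,y1,y2) \<partial>g2 (w1,w2) \<partial>g1 w1 \<partial>e2 (x,w1))"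
      proof (subst nn_integral_bind[OF f], subst measurable_cong_sets[OF s2 refl], measurable, intro nn_integral_cong)
        fix w2 assume "w2 \<in> space (e2 (x,w1))"
        hence w2[measurable]: "w2 \<in> space C2" using sets_eq_imp_space_eq[OF s2] by simp
        have ww: "(w1, w2) \<in> space (C1 \<Otimes>\<^sub>M C2)" using w1 w2 by (simp add: space_pair_measure)
        have s4: "sets (g2 (w1,w2)) = sets MY2" using sk[OF assms(4) ww] .
        show "(\<integral>\<^sup>+z. f z \<partial>(g1 w1 \<bind> (\<lambda>y1. g2 (w1, w2) \<bind>
            (\<lambda>y2. return ?S (x, y1, y2))))) = 
           (\<integral>\<^sup>+y1. \<integral>\<^sup>+y2. f (x,y1,y2) \<partial>g2 (w1,w2) \<partial>g1 w1)"
        proof (subst nn_integral_bind[OF f], subst measurable_cong_sets[OF s3 refl], measurable, intro nn_integral_cong)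
          fix y1 assume "y1 \<in> space (g1 w1)"
          hence y1[measurable]: "y1 \<in> space MY1" using sets_eq_imp_space_eq[OF s3] by simp
          show "(\<integral>\<^sup>+z. f z \<partial>(g2 (w1, w2) \<bind> (\<lambda>y2. return ?S (x, y1, y2)))) = 
             (\<integral>\<^sup>+y2. f (x,y1,y2) \<partial>g2 (w1,w2))"
          proof (subst nn_integral_bind[OF f], subst measurable_cong_sets[OF s4 refl], measurable, intro nn_integral_cong)
            fix y2 assume "y2 \<in> space (g2 (w1,w2))"
            hence y2: "y2 \<in> space MY2" using sets_eq_imp_space_eq[OF s4] by simp
            show "(\<integral>\<^sup>+z. f z \<partial>return ?S (x, y1, y2)) = f (x, y1, y2)"
              using x y1 y2 by (intro nn_integral_return) (auto simp: space_pair_measure)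
          qed
        qed
      qed
    qed
  qed
qed


lemma nn_integral_le_sum_count:
  assumes sN: "sets N = sets (count_space A)" and fin: "finite A" and sp: "subprob_space N"
  shows "(\<integral>\<^sup>+a. \<phi> a \<partial>N) \<le> (\<Sum>a\<in>A. \<phi> a)"
proof -
  have spN: "space N = A" using sets_eq_imp_space_eq[OF sN] by simp
  have "(\<integral>\<^sup>+a. \<phi> a \<partial>N) = (\<integral>\<^sup>+z. (\<Sum>a\<in>A. \<phi> a * indicator {a} z) \<partial>N)"
  proof (rule nn_integral_cong)
    fix z assume "z \<in> space N"
    hence z: "z \<in> A" using spN by simp
    have "(\<Sum>a\<in>A. \<phi> a * indicator {a} z) = (\<Sum>a\<in>{z}. \<phi> a * indicator {a} z)"
      using fin z by (intro sum.mono_neutral_right) (auto simp: indicator_def)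
    thus "\<phi> z = (\<Sum>a\<in>A. \<phi> a * indicator {a} z)" by simp
  qed
  also have "\<dots> = (\<Sum>a\<in>A. \<integral>\<^sup>+z. \<phi> a * indicator {a} z \<partial>N)"
  proof (rule nn_integral_sum)
    fix a assume "a \<in> A"
    hence [measurable]: "{a} \<in> sets N" using sN by simp
    show "(\<lambda>x. \<phi> a * indicator {a} x) \<in> borel_measurable N" by measurable
  qed
  also have "\<dots> = (\<Sum>a\<in>A. \<phi> a * emeasure N {a})"
    using sN by (intro sum.cong refl nn_integral_cmult_indicator) auto
  also have "\<dots> \<le> (\<Sum>a\<in>A. \<phi> a)"
  proof (rule sum_mono)
    fix a assume "a \<in> A"
    have "emeasure N {a} \<le> 1" using subprob_space.subprob_emeasure_le_1[OF sp] .
    thus "\<phi> a * emeasure N {a} \<le> \<phi> a"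
      using mult_left_mono[of "emeasure N {a}" 1 "\<phi> a"] by simp
  qed
  finally show ?thesis .
qed

lemma meas2:
  assumes G: "prob_space G"
    and k[measurable]: "k \<in> borel_measurable (MX \<Otimes>\<^sub>M G)"
  shows "(\<lambda>x. \<integral>\<^sup>+y. k (x, y) \<partial>G) \<in> borel_measurable MX"
    by (rule sigma_finite_measure.borel_measurable_nn_integral[OF prob_space_imp_sigma_finite[OF G], of "\<lambda>x y. k (x, y)"]) measurable

lemma swap2:
  assumes MX: "sigma_finite_measure MX" and G: "prob_space G"
    and k[measurable]: "k \<in> borel_measurable (MX \<Otimes>\<^sub>M G)"
    and le: "\<And>y. y \<in> space G \<Longrightarrow> (\<integral>\<^sup>+x. k (x, y) \<partial>MX) \<le> 1"
  shows "(\<integral>\<^sup>+x. \<integral>\<^sup>+y. k (x, y) \<partial>G \<partial>MX) \<le> 1"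
proof -
  interpret pair_sigma_finite MX G
    using MX G by (simp add: pair_sigma_finite_def prob_space_imp_sigma_finite)
  have "(\<integral>\<^sup>+x. \<integral>\<^sup>+y. k (x, y) \<partial>G \<partial>MX) = (\<integral>\<^sup>+y. \<integral>\<^sup>+x. k (x, y) \<partial>MX \<partial>G)"
    by (rule Fubini'[symmetric]) simp
  also have "\<dots> \<le> (\<integral>\<^sup>+y. 1 \<partial>G)"
    by (intro nn_integral_mono le)
  also have "\<dots> = 1" using G by (simp add: prob_space.emeasure_space_1)
  finally show ?thesis .
qed

lemma swap3:
  assumes MX: "sigma_finite_measure MX" and G1: "prob_space G1" and G2: "prob_space G2"
    and h[measurable]: "h \<in> borel_measurable (MX \<Otimes>\<^sub>M G1 \<Otimes>\<^sub>M G2)"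
    and le: "\<And>y1 y2. y1 \<in> space G1 \<Longrightarrow> y2 \<in> space G2 \<Longrightarrow> (\<integral>\<^sup>+x. h (x, y1, y2) \<partial>MX) \<le> 1"
  shows "(\<integral>\<^sup>+x. \<integral>\<^sup>+y1. \<integral>\<^sup>+y2. h (x, y1, y2) \<partial>G2 \<partial>G1 \<partial>MX) \<le> 1"
    and "(\<lambda>x. \<integral>\<^sup>+y1. \<integral>\<^sup>+y2. h (x, y1, y2) \<partial>G2 \<partial>G1) \<in> borel_measurable MX"
proof -
  have m: "(\<lambda>p. \<integral>\<^sup>+y2. h (fst p, snd p, y2) \<partial>G2) \<in> borel_measurable (MX \<Otimes>\<^sub>M G1)"
      by (rule sigma_finite_measure.borel_measurable_nn_integral[OF prob_space_imp_sigma_finite[OF G2], of "\<lambda>p y2. h (fst p, snd p, y2)"]) measurable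
  show "(\<lambda>x. \<integral>\<^sup>+y1. \<integral>\<^sup>+y2. h (x, y1, y2) \<partial>G2 \<partial>G1) \<in> borel_measurable MX"
    using meas2[OF G1 m] by simp
  have "(\<integral>\<^sup>+x. \<integral>\<^sup>+y1. (\<lambda>p. \<integral>\<^sup>+y2. h (fst p, snd p, y2) \<partial>G2) (x, y1) \<partial>G1 \<partial>MX) \<le> 1"
  proof (rule swap2[OF MX G1])
    show "(\<lambda>p. \<integral>\<^sup>+y2. h (fst p, snd p, y2) \<partial>G2) \<in> borel_measurable (MX \<Otimes>\<^sub>M G1)"
      by (rule sigma_finite_measure.borel_measurable_nn_integral[OF prob_space_imp_sigma_finite[OF G2], of "\<lambda>p y2. h (fst p, snd p, y2)"]) measurable
    fix y1 assume y1: "y1 \<in> space G1"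
    show "(\<integral>\<^sup>+x. (\<lambda>p. \<integral>\<^sup>+y2. h (fst p, snd p, y2) \<partial>G2) (x, y1) \<partial>MX) \<le> 1"
      using swap2[OF MX G2, of "\<lambda>p. h (fst p, y1, snd p)"] y1 le by simp
  qed
  thus "(\<integral>\<^sup>+x. \<integral>\<^sup>+y1. \<integral>\<^sup>+y2. h (x, y1, y2) \<partial>G2 \<partial>G1 \<partial>MX) \<le> 1" by simp
qed

lemma key_ineq:
  fixes b M s t \<gamma> :: real
  assumes "b > 0" "M > 0" "ln b - t \<ge> ln M + \<gamma>" "s \<le> t"
  shows "1 \<le> exp (- \<gamma>) / M * (exp (- s) * b)"
proof -
  have "exp (ln M + \<gamma>) \<le> exp (ln b - s)" using assms by simp
  hence "M * exp \<gamma> \<le> b * exp (- s)" using assms by (simp add: exp_add exp_diff exp_minus field_simps)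
  hence "M * exp \<gamma> * exp (- \<gamma>) \<le> b * exp (- s) * exp (- \<gamma>)" by (simp add: mult_right_mono)
  moreover have "M * exp \<gamma> * exp (- \<gamma>) = M" by (simp add: mult.assoc exp_minus_inverse)
  ultimately have "M \<le> b * exp (- s) * exp (- \<gamma>)" by simp
  thus ?thesis using assms by (simp add: field_simps)
qed

lemma bound_lemma:
  assumes sp: "subprob_space P" and E: "E \<in> sets P" and Ac: "Ac \<in> sets P"
    and h[measurable]: "h \<in> borel_measurable P"
    and pt: "\<And>z. z \<in> space P \<Longrightarrow> z \<in> E \<Longrightarrow> z \<notin> Ac \<Longrightarrow> 1 \<le> c * h z"
    and eps: "measure P Ac \<le> \<epsilon>"
    and int: "c * (\<integral>\<^sup>+z. h z \<partial>P) \<le> ennreal \<delta>" and \<delta>: "\<delta> \<ge> 0"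
  shows "\<epsilon> \<ge> measure P E - \<delta>"
proof -
  interpret subprob_space P by (rule sp)
  have [measurable]: "E \<in> sets P" "Ac \<in> sets P" using E Ac by auto
  have "emeasure P E = (\<integral>\<^sup>+z. indicator E z \<partial>P)" using E by simp
  also have "\<dots> \<le> (\<integral>\<^sup>+z. indicator Ac z + c * h z \<partial>P)"
  proof (rule nn_integral_mono)
    fix z assume z: "z \<in> space P"
    show "indicator E z \<le> indicator Ac z + c * h z"
      using pt[OF z] by (cases "z \<in> E"; cases "z \<in> Ac") (auto simp: indicator_def)
  qed
  also have "\<dots> = emeasure P Ac + c * (\<integral>\<^sup>+z. h z \<partial>P)"
    using Ac by (subst nn_integral_add) (auto simp: nn_integral_cmult)
  also have "\<dots> \<le> ennreal (measure P Ac) + ennreal \<delta>"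
    using int by (intro add_mono) (auto simp: emeasure_eq_measure)
  also have "\<dots> = ennreal (measure P Ac + \<delta>)" using \<delta> by (simp add: ennreal_plus)
  finally have "ennreal (measure P E) \<le> ennreal (measure P Ac + \<delta>)"
    by (simp add: emeasure_eq_measure)
  hence "measure P E \<le> measure P Ac + \<delta>"
    using \<delta> by (subst (asm) ennreal_le_iff) auto
  thus ?thesis using eps by simp
qed

theorem mainTheorem5:
  fixes MX :: "'x measure" and MY1 :: "'y1 measure" and MY2 :: "'y2 measure"
    and dist1 :: "'x \<Rightarrow> 'y1 \<Rightarrow> real" and dist2 :: "'x \<Rightarrow> 'y2 \<Rightarrow> real"
    and \<beta>1 :: "'x \<Rightarrow> real" and \<beta>2 :: "'x \<Rightarrow> 'y1 \<Rightarrow> real"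
    and lam1 lam2 \<nu>1 :: real
    and M1 M2 :: nat and d1 d2 \<epsilon>1 \<epsilon>2 :: real
    and e1 :: "'x \<Rightarrow> nat measure" and e2 :: "'x \<times> nat \<Rightarrow> nat measure"
    and g1 :: "nat \<Rightarrow> 'y1 measure" and g2 :: "nat \<times> nat \<Rightarrow> 'y2 measure"
    and \<gamma>1 \<gamma>2 :: real
  assumes PX: "prob_space MX"
    and sing_X: "\<And>x. x \<in> space MX \<Longrightarrow> {x} \<in> sets MX"
    and sing_Y1: "\<And>y. y \<in> space MY1 \<Longrightarrow> {y} \<in> sets MY1"
    and sing_Y2: "\<And>y. y \<in> space MY2 \<Longrightarrow> {y} \<in> sets MY2"
    and dist1_meas: "(\<lambda>(x, y). dist1 x y) \<in> borel_measurable (MX \<Otimes>\<^sub>M MY1)"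
    and dist2_meas: "(\<lambda>(x, y). dist2 x y) \<in> borel_measurable (MX \<Otimes>\<^sub>M MY2)"
    and dist1_nonneg: "\<And>x y. x \<in> space MX \<Longrightarrow> y \<in> space MY1 \<Longrightarrow> dist1 x y \<ge> 0"
    and dist2_nonneg: "\<And>x y. x \<in> space MX \<Longrightarrow> y \<in> space MY2 \<Longrightarrow> dist2 x y \<ge> 0"
    and \<beta>1_meas: "\<beta>1 \<in> borel_measurable MX"
    and \<beta>2_meas: "(\<lambda>(x, y). \<beta>2 x y) \<in> borel_measurable (MX \<Otimes>\<^sub>M MY1)"
    and \<beta>1_pos: "\<And>x. x \<in> space MX \<Longrightarrow> \<beta>1 x > 0"
    and \<beta>2_pos: "\<And>x y. x \<in> space MX \<Longrightarrow> y \<in> space MY1 \<Longrightarrow> \<beta>2 x y > 0"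
    and lam1_nonneg: "lam1 \<ge> 0" and lam2_nonneg: "lam2 \<ge> 0" and \<nu>1_nonneg: "\<nu>1 \<ge> 0"
    and Sigma1_le: "\<And>y1. y1 \<in> space MY1 \<Longrightarrow> Sigma1 MX dist1 \<beta>1 \<beta>2 lam1 \<nu>1 y1 \<le> 1"
    and Sigma2_le: "\<And>y1 y2. y1 \<in> space MY1 \<Longrightarrow> y2 \<in> space MY2 \<Longrightarrow>
                      Sigma2 MX dist1 dist2 \<beta>1 \<beta>2 lam1 lam2 \<nu>1 y1 y2 \<le> 1"
    and code: "is_code MX MY1 MY2 dist1 dist2 M1 M2 d1 d2 \<epsilon>1 \<epsilon>2 e1 e2 g1 g2"
    and \<gamma>1_pos: "\<gamma>1 > 0" and \<gamma>2_pos: "\<gamma>2 > 0"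
  shows "\<epsilon>1 \<ge> measure (joint_law MX MY1 MY2 e1 e2 g1 g2)
            {(x, y1, y2) \<in> space (joint_law MX MY1 MY2 e1 e2 g1 g2).
               ln (\<beta>2 x y1 powr (1 / (1 + \<nu>1)) / \<beta>1 x) - lam1 / (1 + \<nu>1) * d1
                 \<ge> ln (real M1) + \<gamma>1} - exp (- \<gamma>1)
    \<and> \<epsilon>2 \<ge> measure (joint_law MX MY1 MY2 e1 e2 g1 g2)
            {(x, y1, y2) \<in> space (joint_law MX MY1 MY2 e1 e2 g1 g2).
               ln (\<beta>2 x y1 powr (- \<nu>1 / (1 + \<nu>1)) / \<beta>1 x) - lam1 / (1 + \<nu>1) * d1 - lam2 * d2
                 \<ge> ln (real M2) + \<gamma>2} - exp (- \<gamma>2)"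
proof -
  define C1 where "C1 = count_space {1..M1}"
  define C2 where "C2 = count_space {1..M2 div M1}"
  define S where "S = MX \<Otimes>\<^sub>M MY1 \<Otimes>\<^sub>M MY2"
  define P where "P = joint_law MX MY1 MY2 e1 e2 g1 g2"
  define a where "a = lam1 / (1 + \<nu>1)"
  have a0: "a \<ge> 0" using lam1_nonneg \<nu>1_nonneg by (simp add: a_def)
  from code have e1P: "e1 \<in> MX \<rightarrow>\<^sub>M prob_algebra C1" and e2P: "e2 \<in> MX \<Otimes>\<^sub>M C1 \<rightarrow>\<^sub>M prob_algebra C2"
    and g1P: "g1 \<in> C1 \<rightarrow>\<^sub>M prob_algebra MY1" and g2P: "g2 \<in> C1 \<Otimes>\<^sub>M C2 \<rightarrow>\<^sub>M prob_algebra MY2"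
    and eps1: "measure P {(x, y1, y2) \<in> space P. \<not> dist1 x y1 \<le> d1} \<le> \<epsilon>1"
    and eps2: "measure P {(x, y1, y2) \<in> space P. \<not> (dist1 x y1 \<le> d1 \<and> dist2 x y2 \<le> d2)} \<le> \<epsilon>2"
    unfolding is_code_def Let_def C1_def C2_def P_def by auto
  note e1S[measurable] = measurable_prob_algebraD[OF e1P]
  note e2S[measurable] = measurable_prob_algebraD[OF e2P]
  note g1S[measurable] = measurable_prob_algebraD[OF g1P]
  note g2S[measurable] = measurable_prob_algebraD[OF g2P]
  interpret PX: prob_space MX by (rule PX)
  have neX: "space MX \<noteq> {}" by (rule PX.not_empty)
  obtain x0 where x0: "x0 \<in> space MX" using neX by auto
  have pe1: "prob_space (e1 x) \<and> space (e1 x) = {1..M1} \<and> sets (e1 x) = sets C1" if "x \<in> space MX" for x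
  proof -
    have "e1 x \<in> space (prob_algebra C1)" using measurable_space[OF e1P that] .
    thus ?thesis using sets_eq_imp_space_eq[of "e1 x" C1] by (auto simp: space_prob_algebra C1_def)
  qed
  have pe2: "prob_space (e2 (x, w1)) \<and> space (e2 (x, w1)) = {1..M2 div M1} \<and> sets (e2 (x, w1)) = sets C2"
    if "x \<in> space MX" "w1 \<in> {1..M1}" for x w1
  proof -
    have "(x, w1) \<in> space (MX \<Otimes>\<^sub>M C1)" using that by (simp add: space_pair_measure C1_def)
    hence "e2 (x, w1) \<in> space (prob_algebra C2)" using measurable_space[OF e2P] by blast
    thus ?thesis using sets_eq_imp_space_eq[of "e2 (x, w1)" C2] by (auto simp: space_prob_algebra C2_def)
  qed
  have pg1: "prob_space (g1 w1) \<and> space (g1 w1) = space MY1 \<and> sets (g1 w1) = sets MY1"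
    if "w1 \<in> {1..M1}" for w1
  proof -
    have "w1 \<in> space C1" using that by (simp add: C1_def)
    hence "g1 w1 \<in> space (prob_algebra MY1)" using measurable_space[OF g1P] by blast
    thus ?thesis using sets_eq_imp_space_eq[of "g1 w1" MY1] by (auto simp: space_prob_algebra)
  qed
  have pg2: "prob_space (g2 (w1, w2)) \<and> space (g2 (w1, w2)) = space MY2 \<and> sets (g2 (w1, w2)) = sets MY2"
    if "w1 \<in> {1..M1}" "w2 \<in> {1..M2 div M1}" for w1 w2
  proof -
    have "(w1, w2) \<in> space (C1 \<Otimes>\<^sub>M C2)" using that by (simp add: C1_def C2_def space_pair_measure)
    hence "g2 (w1, w2) \<in> space (prob_algebra MY2)" using measurable_space[OF g2P] by blast
    thus ?thesis using sets_eq_imp_space_eq[of "g2 (w1, w2)" MY2] by (auto simp: space_prob_algebra)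
  qed
  have M1pos: "M1 \<ge> 1"
  proof -
    have "{1..M1} \<noteq> {}" using pe1[OF x0] prob_space.not_empty by metis
    thus ?thesis by auto
  qed
  have M21pos: "M2 div M1 \<ge> 1"
  proof -
    have "{1..M2 div M1} \<noteq> {}" using pe2[OF x0, of 1] M1pos prob_space.not_empty by fastforce
    thus ?thesis by auto
  qed
  have M12: "M1 * (M2 div M1) \<le> M2" by (metis times_div_less_eq_dividend)
  have M2pos: "M2 \<ge> 1" using le_trans[OF mult_le_mono[OF M1pos M21pos] M12] by simp
  have K[measurable]: "(\<lambda>x. e1 x \<bind> (\<lambda>w1. e2 (x, w1) \<bind> (\<lambda>w2. g1 w1 \<bind> (\<lambda>y1. g2 (w1, w2) \<bind>
       (\<lambda>y2. return S (x, y1, y2)))))) \<in> MX \<rightarrow>\<^sub>M subprob_algebra S"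
    unfolding S_def by measurable
  have P_eq: "P = MX \<bind> (\<lambda>x. e1 x \<bind> (\<lambda>w1. e2 (x, w1) \<bind> (\<lambda>w2. g1 w1 \<bind> (\<lambda>y1. g2 (w1, w2) \<bind>
       (\<lambda>y2. return S (x, y1, y2))))))" by (simp add: P_def joint_law_def S_def)
  have setsP: "sets P = sets S" using sets_bind_measurable[OF K neX] P_eq by simp
  have spaceP: "space P = space S" using sets_eq_imp_space_eq[OF setsP] .
  have spP: "subprob_space P"
    using subprob_space_bind[OF prob_space_imp_subprob_space[OF PX] K] P_eq by simp
  have jn: "(\<integral>\<^sup>+z. f z \<partial>P) =
    (\<integral>\<^sup>+x. \<integral>\<^sup>+w1. \<integral>\<^sup>+w2. \<integral>\<^sup>+y1. \<integral>\<^sup>+y2. f (x,y1,y2) \<partial>g2 (w1,w2) \<partial>g1 w1 \<partial>e2 (x,w1) \<partial>e1 x \<partial>MX)"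
    if "f \<in> borel_measurable S" for f
    unfolding P_def by (rule joint_nn[OF e1S e2S g1S g2S that[unfolded S_def]])
  have d1m: "(\<lambda>p. dist1 (fst p) (snd p)) \<in> borel_measurable (MX \<Otimes>\<^sub>M MY1)"
    using dist1_meas by (simp add: case_prod_beta')
  have d2m: "(\<lambda>p. dist2 (fst p) (snd p)) \<in> borel_measurable (MX \<Otimes>\<^sub>M MY2)"
    using dist2_meas by (simp add: case_prod_beta')
  have b2m: "(\<lambda>p. \<beta>2 (fst p) (snd p)) \<in> borel_measurable (MX \<Otimes>\<^sub>M MY1)"
    using \<beta>2_meas by (simp add: case_prod_beta')
  note [measurable] = \<beta>1_meas
  have d1S[measurable]: "(\<lambda>z. dist1 (fst z) (fst (snd z))) \<in> borel_measurable S"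
    using measurable_compose[OF _ d1m, of "\<lambda>z. (fst z, fst (snd z))" S] unfolding S_def by simp
  have d2S[measurable]: "(\<lambda>z. dist2 (fst z) (snd (snd z))) \<in> borel_measurable S"
    using measurable_compose[OF _ d2m, of "\<lambda>z. (fst z, snd (snd z))" S] unfolding S_def by simp
  have b2S[measurable]: "(\<lambda>z. \<beta>2 (fst z) (fst (snd z))) \<in> borel_measurable S"
    using measurable_compose[OF _ b2m, of "\<lambda>z. (fst z, fst (snd z))" S] unfolding S_def by simp
  have b1S[measurable]: "(\<lambda>z. \<beta>1 (fst z)) \<in> borel_measurable S" unfolding S_def by measurable
  have spS: "z \<in> space S \<longleftrightarrow> fst z \<in> space MX \<and> fst (snd z) \<in> space MY1 \<and> snd (snd z) \<in> space MY2" for z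
    by (cases z) (auto simp: S_def space_pair_measure)

  define h1 where "h1 = (\<lambda>z::'x \<times> 'y1 \<times> 'y2. ennreal (exp (- (lam1 / (1 + \<nu>1)) * dist1 (fst z) (fst (snd z)))
                   * \<beta>2 (fst z) (fst (snd z)) powr (1 / (1 + \<nu>1)) / \<beta>1 (fst z)))"
  define k1 where "k1 = (\<lambda>p::'x \<times> 'y1. ennreal (exp (- (lam1 / (1 + \<nu>1)) * dist1 (fst p) (snd p))
                   * \<beta>2 (fst p) (snd p) powr (1 / (1 + \<nu>1)) / \<beta>1 (fst p)))"
  have h1S[measurable]: "h1 \<in> borel_measurable S" unfolding h1_def by measurable
  have k1m: "k1 \<in> borel_measurable (MX \<Otimes>\<^sub>M MY1)" unfolding k1_def
    using d1m b2m by measurable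
  have int1: "(\<integral>\<^sup>+z. h1 z \<partial>P) \<le> of_nat M1"
  proof -
    have "(\<integral>\<^sup>+z. h1 z \<partial>P) =
      (\<integral>\<^sup>+x. \<integral>\<^sup>+w1. \<integral>\<^sup>+w2. \<integral>\<^sup>+y1. \<integral>\<^sup>+y2. h1 (x,y1,y2) \<partial>g2 (w1,w2) \<partial>g1 w1 \<partial>e2 (x,w1) \<partial>e1 x \<partial>MX)"
      by (rule jn[OF h1S])
    also have "\<dots> = (\<integral>\<^sup>+x. \<integral>\<^sup>+w1. \<integral>\<^sup>+y1. k1 (x,y1) \<partial>g1 w1 \<partial>e1 x \<partial>MX)"
    proof (intro nn_integral_cong)
      fix x w1 assume x: "x \<in> space MX" and w1: "w1 \<in> space (e1 x)"
      hence w1': "w1 \<in> {1..M1}" using pe1[OF x] by simp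
      have "(\<integral>\<^sup>+w2. \<integral>\<^sup>+y1. \<integral>\<^sup>+y2. h1 (x,y1,y2) \<partial>g2 (w1,w2) \<partial>g1 w1 \<partial>e2 (x,w1))
          = (\<integral>\<^sup>+w2. \<integral>\<^sup>+y1. k1 (x,y1) \<partial>g1 w1 \<partial>e2 (x,w1))"
      proof (intro nn_integral_cong)
        fix w2 y1 assume w2: "w2 \<in> space (e2 (x, w1))"
        hence w2': "w2 \<in> {1..M2 div M1}" using pe2[OF x w1'] by simp
        have ps: "prob_space (g2 (w1, w2))" using pg2[OF w1' w2'] by simp
        show "(\<integral>\<^sup>+y2. h1 (x,y1,y2) \<partial>g2 (w1,w2)) = k1 (x, y1)"
          using prob_space.emeasure_space_1[OF ps] by (simp add: h1_def k1_def)
      qed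
      also have "\<dots> = (\<integral>\<^sup>+y1. k1 (x,y1) \<partial>g1 w1)"
        using prob_space.emeasure_space_1[of "e2 (x, w1)"] pe2[OF x w1'] by simp
      finally show "(\<integral>\<^sup>+w2. \<integral>\<^sup>+y1. \<integral>\<^sup>+y2. h1 (x,y1,y2) \<partial>g2 (w1,w2) \<partial>g1 w1 \<partial>e2 (x,w1))
          = (\<integral>\<^sup>+y1. k1 (x,y1) \<partial>g1 w1)" .
    qed
    also have "\<dots> \<le> (\<integral>\<^sup>+x. (\<Sum>w1\<in>{1..M1}. \<integral>\<^sup>+y1. k1 (x,y1) \<partial>g1 w1) \<partial>MX)"
    proof (intro nn_integral_mono)
      fix x assume x: "x \<in> space MX"
      show "(\<integral>\<^sup>+w1. \<integral>\<^sup>+y1. k1 (x,y1) \<partial>g1 w1 \<partial>e1 x) \<le> (\<Sum>w1\<in>{1..M1}. \<integral>\<^sup>+y1. k1 (x,y1) \<partial>g1 w1)"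
        using pe1[OF x] by (intro nn_integral_le_sum_count) (auto simp: C1_def prob_space_imp_subprob_space)
    qed
    also have "\<dots> = (\<Sum>w1\<in>{1..M1}. \<integral>\<^sup>+x. \<integral>\<^sup>+y1. k1 (x,y1) \<partial>g1 w1 \<partial>MX)"
    proof (rule nn_integral_sum)
      fix w1 assume w1: "w1 \<in> {1..M1}"
      have "k1 \<in> borel_measurable (MX \<Otimes>\<^sub>M g1 w1)"
        using k1m pg1[OF w1] by (simp cong: measurable_cong_sets sets_pair_measure_cong)
      thus "(\<lambda>x. \<integral>\<^sup>+y1. k1 (x,y1) \<partial>g1 w1) \<in> borel_measurable MX"
        using meas2[of "g1 w1" k1 MX] pg1[OF w1] by simp
    qed
    also have "\<dots> \<le> (\<Sum>w1\<in>{1..M1}. 1)"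
    proof (rule sum_mono)
      fix w1 assume w1: "w1 \<in> {1..M1}"
      have km: "k1 \<in> borel_measurable (MX \<Otimes>\<^sub>M g1 w1)"
        using k1m pg1[OF w1] by (simp cong: measurable_cong_sets sets_pair_measure_cong)
      show "(\<integral>\<^sup>+x. \<integral>\<^sup>+y1. k1 (x,y1) \<partial>g1 w1 \<partial>MX) \<le> 1"
      proof (rule swap2[OF prob_space_imp_sigma_finite[OF PX] _ km])
        show "prob_space (g1 w1)" using pg1[OF w1] by simp
        fix y assume "y \<in> space (g1 w1)"
        hence y: "y \<in> space MY1" using pg1[OF w1] by simp
        show "(\<integral>\<^sup>+x. k1 (x, y) \<partial>MX) \<le> 1"
          using Sigma1_le[OF y] by (simp add: Sigma1_def k1_def)
      qed
    qed
    also have "\<dots> = of_nat M1" by simp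
    finally show ?thesis .
  qed
  have c1: "\<epsilon>1 \<ge> measure P {(x, y1, y2) \<in> space P.
               ln (\<beta>2 x y1 powr (1 / (1 + \<nu>1)) / \<beta>1 x) - lam1 / (1 + \<nu>1) * d1
                 \<ge> ln (real M1) + \<gamma>1} - exp (- \<gamma>1)"
  proof (rule bound_lemma[OF spP])
    show "{(x, y1, y2) \<in> space P. ln (\<beta>2 x y1 powr (1 / (1 + \<nu>1)) / \<beta>1 x) - lam1 / (1 + \<nu>1) * d1
                 \<ge> ln (real M1) + \<gamma>1} \<in> sets P"
    proof -
      have "{(x, y1, y2) \<in> space S. ln (\<beta>2 x y1 powr (1 / (1 + \<nu>1)) / \<beta>1 x) - lam1 / (1 + \<nu>1) * d1
                 \<ge> ln (real M1) + \<gamma>1} \<in> sets S" unfolding case_prod_beta' prod.collapse by measurable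
      thus ?thesis by (simp add: setsP spaceP)
    qed
    show "{(x, y1, y2) \<in> space P. \<not> dist1 x y1 \<le> d1} \<in> sets P"
    proof -
      have "{(x, y1, y2) \<in> space S. \<not> dist1 x y1 \<le> d1} \<in> sets S" unfolding case_prod_beta' prod.collapse by measurable
      thus ?thesis by (simp add: setsP spaceP)
    qed
    show "h1 \<in> borel_measurable P" using h1S by (simp cong: measurable_cong_sets add: setsP)
    show "measure P {(x, y1, y2) \<in> space P. \<not> dist1 x y1 \<le> d1} \<le> \<epsilon>1" by (rule eps1)
    show "exp (- \<gamma>1) \<ge> 0" by simp
    have "ennreal (exp (- \<gamma>1) / real M1) * (\<integral>\<^sup>+z. h1 z \<partial>P) \<le> ennreal (exp (- \<gamma>1) / real M1) * of_nat M1"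
      by (rule mult_left_mono[OF int1]) simp
    also have "\<dots> = ennreal (exp (- \<gamma>1))"
      using M1pos by (simp add: ennreal_of_nat_eq_real_of_nat ennreal_mult''[symmetric])
    finally show "ennreal (exp (- \<gamma>1) / real M1) * (\<integral>\<^sup>+z. h1 z \<partial>P) \<le> ennreal (exp (- \<gamma>1))" .
    fix z assume z: "z \<in> space P"
      and zE: "z \<in> {(x, y1, y2) \<in> space P. ln (\<beta>2 x y1 powr (1 / (1 + \<nu>1)) / \<beta>1 x) - lam1 / (1 + \<nu>1) * d1
                 \<ge> ln (real M1) + \<gamma>1}"
      and zA: "z \<notin> {(x, y1, y2) \<in> space P. \<not> dist1 x y1 \<le> d1}"
    obtain x y1 y2 where zz: "z = (x, y1, y2)" by (cases z)
    have x: "x \<in> space MX" and y1: "y1 \<in> space MY1" using z zz spS[of z] spaceP by auto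
    have b: "\<beta>2 x y1 powr (1 / (1 + \<nu>1)) / \<beta>1 x > 0" using \<beta>1_pos[OF x] \<beta>2_pos[OF x y1] by simp
    have E: "ln (\<beta>2 x y1 powr (1 / (1 + \<nu>1)) / \<beta>1 x) - a * d1 \<ge> ln (real M1) + \<gamma>1"
      using zE zz by (simp add: a_def)
    have D: "dist1 x y1 \<le> d1" using zA z zz by auto
    have st: "a * dist1 x y1 \<le> a * d1" using mult_left_mono[OF D a0] .
    have "1 \<le> exp (- \<gamma>1) / real M1 * (exp (- (a * dist1 x y1)) * (\<beta>2 x y1 powr (1 / (1 + \<nu>1)) / \<beta>1 x))"
      by (rule key_ineq[OF b _ E st]) (use M1pos in simp)
    also have "\<dots> = exp (- \<gamma>1) / real M1 * (exp (- (lam1 / (1 + \<nu>1)) * dist1 x y1)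
                   * \<beta>2 x y1 powr (1 / (1 + \<nu>1)) / \<beta>1 x)" by (simp add: a_def)
    finally have r: "1 \<le> \<dots>" .
    have "ennreal 1 \<le> ennreal (exp (- \<gamma>1) / real M1 * (exp (- (lam1 / (1 + \<nu>1)) * dist1 x y1)
                   * \<beta>2 x y1 powr (1 / (1 + \<nu>1)) / \<beta>1 x))" by (rule ennreal_leI[OF r])
    thus "1 \<le> ennreal (exp (- \<gamma>1) / real M1) * h1 z"
      using b \<beta>1_pos[OF x] by (simp add: zz h1_def ennreal_mult''[symmetric])
  qed
  define h2 where "h2 = (\<lambda>z::'x \<times> 'y1 \<times> 'y2. ennreal (exp (- (lam1 / (1 + \<nu>1)) * dist1 (fst z) (fst (snd z))
             - lam2 * dist2 (fst z) (snd (snd z))) / (\<beta>1 (fst z) * \<beta>2 (fst z) (fst (snd z)) powr (\<nu>1 / (1 + \<nu>1)))))"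
  have h2S[measurable]: "h2 \<in> borel_measurable S" unfolding h2_def by measurable
  have hm2: "h2 \<in> borel_measurable (MX \<Otimes>\<^sub>M g1 w1 \<Otimes>\<^sub>M g2 (w1, w2))"
    if "w1 \<in> {1..M1}" "w2 \<in> {1..M2 div M1}" for w1 w2
    using h2S pg1[OF that(1)] pg2[OF that] unfolding S_def
    by (simp cong: measurable_cong_sets sets_pair_measure_cong)
  have sw2: "(\<integral>\<^sup>+x. \<integral>\<^sup>+y1. \<integral>\<^sup>+y2. h2 (x, y1, y2) \<partial>g2 (w1, w2) \<partial>g1 w1 \<partial>MX) \<le> 1"
    and mw2: "(\<lambda>x. \<integral>\<^sup>+y1. \<integral>\<^sup>+y2. h2 (x, y1, y2) \<partial>g2 (w1, w2) \<partial>g1 w1) \<in> borel_measurable MX"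
    if w: "w1 \<in> {1..M1}" "w2 \<in> {1..M2 div M1}" for w1 w2
  proof -
    have le: "(\<integral>\<^sup>+x. h2 (x, y1, y2) \<partial>MX) \<le> 1" if "y1 \<in> space (g1 w1)" "y2 \<in> space (g2 (w1, w2))" for y1 y2
    proof -
      have "y1 \<in> space MY1" "y2 \<in> space MY2" using that pg1[OF w(1)] pg2[OF w] by auto
      thus ?thesis using Sigma2_le[of y1 y2] by (simp add: Sigma2_def h2_def)
    qed
    have pp: "prob_space (g1 w1)" "prob_space (g2 (w1, w2))" using pg1[OF w(1)] pg2[OF w] by auto
    show "(\<integral>\<^sup>+x. \<integral>\<^sup>+y1. \<integral>\<^sup>+y2. h2 (x, y1, y2) \<partial>g2 (w1, w2) \<partial>g1 w1 \<partial>MX) \<le> 1"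
      by (rule swap3(1)[OF prob_space_imp_sigma_finite[OF PX] pp hm2[OF w] le])
    show "(\<lambda>x. \<integral>\<^sup>+y1. \<integral>\<^sup>+y2. h2 (x, y1, y2) \<partial>g2 (w1, w2) \<partial>g1 w1) \<in> borel_measurable MX"
      by (rule swap3(2)[OF prob_space_imp_sigma_finite[OF PX] pp hm2[OF w] le])
  qed
  have int2: "(\<integral>\<^sup>+z. h2 z \<partial>P) \<le> of_nat M2"
  proof -
    have "(\<integral>\<^sup>+z. h2 z \<partial>P) =
      (\<integral>\<^sup>+x. \<integral>\<^sup>+w1. \<integral>\<^sup>+w2. \<integral>\<^sup>+y1. \<integral>\<^sup>+y2. h2 (x,y1,y2) \<partial>g2 (w1,w2) \<partial>g1 w1 \<partial>e2 (x,w1) \<partial>e1 x \<partial>MX)"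
      by (rule jn[OF h2S])
    also have "\<dots> \<le> (\<integral>\<^sup>+x. (\<Sum>w1\<in>{1..M1}. \<Sum>w2\<in>{1..M2 div M1}.
         \<integral>\<^sup>+y1. \<integral>\<^sup>+y2. h2 (x,y1,y2) \<partial>g2 (w1,w2) \<partial>g1 w1) \<partial>MX)"
    proof (intro nn_integral_mono)
      fix x assume x: "x \<in> space MX"
      have "(\<integral>\<^sup>+w1. \<integral>\<^sup>+w2. \<integral>\<^sup>+y1. \<integral>\<^sup>+y2. h2 (x,y1,y2) \<partial>g2 (w1,w2) \<partial>g1 w1 \<partial>e2 (x,w1) \<partial>e1 x)
         \<le> (\<Sum>w1\<in>{1..M1}. \<integral>\<^sup>+w2. \<integral>\<^sup>+y1. \<integral>\<^sup>+y2. h2 (x,y1,y2) \<partial>g2 (w1,w2) \<partial>g1 w1 \<partial>e2 (x,w1))"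
        using pe1[OF x] by (intro nn_integral_le_sum_count) (auto simp: C1_def prob_space_imp_subprob_space)
      also have "\<dots> \<le> (\<Sum>w1\<in>{1..M1}. \<Sum>w2\<in>{1..M2 div M1}. \<integral>\<^sup>+y1. \<integral>\<^sup>+y2. h2 (x,y1,y2) \<partial>g2 (w1,w2) \<partial>g1 w1)"
      proof (rule sum_mono)
        fix w1 assume w1: "w1 \<in> {1..M1}"
        show "(\<integral>\<^sup>+w2. \<integral>\<^sup>+y1. \<integral>\<^sup>+y2. h2 (x,y1,y2) \<partial>g2 (w1,w2) \<partial>g1 w1 \<partial>e2 (x,w1))
          \<le> (\<Sum>w2\<in>{1..M2 div M1}. \<integral>\<^sup>+y1. \<integral>\<^sup>+y2. h2 (x,y1,y2) \<partial>g2 (w1,w2) \<partial>g1 w1)"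
          using pe2[OF x w1] by (intro nn_integral_le_sum_count) (auto simp: C2_def prob_space_imp_subprob_space)
      qed
      finally show "(\<integral>\<^sup>+w1. \<integral>\<^sup>+w2. \<integral>\<^sup>+y1. \<integral>\<^sup>+y2. h2 (x,y1,y2) \<partial>g2 (w1,w2) \<partial>g1 w1 \<partial>e2 (x,w1) \<partial>e1 x)
         \<le> (\<Sum>w1\<in>{1..M1}. \<Sum>w2\<in>{1..M2 div M1}. \<integral>\<^sup>+y1. \<integral>\<^sup>+y2. h2 (x,y1,y2) \<partial>g2 (w1,w2) \<partial>g1 w1)" .
    qed
    also have "\<dots> = (\<Sum>w1\<in>{1..M1}. \<integral>\<^sup>+x. (\<Sum>w2\<in>{1..M2 div M1}.
         \<integral>\<^sup>+y1. \<integral>\<^sup>+y2. h2 (x,y1,y2) \<partial>g2 (w1,w2) \<partial>g1 w1) \<partial>MX)"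
      by (intro nn_integral_sum borel_measurable_sum mw2) auto
    also have "\<dots> = (\<Sum>w1\<in>{1..M1}. \<Sum>w2\<in>{1..M2 div M1}. \<integral>\<^sup>+x.
         \<integral>\<^sup>+y1. \<integral>\<^sup>+y2. h2 (x,y1,y2) \<partial>g2 (w1,w2) \<partial>g1 w1 \<partial>MX)"
      by (intro sum.cong refl nn_integral_sum mw2) auto
    also have "\<dots> \<le> (\<Sum>w1\<in>{1..M1}. \<Sum>w2\<in>{1..M2 div M1}. 1)"
      by (intro sum_mono sw2) auto
    also have "\<dots> = of_nat (M1 * (M2 div M1))" by simp
    also have "\<dots> \<le> of_nat M2" by (rule of_nat_mono[OF M12])
    finally show ?thesis .
  qed
  have c2: "\<epsilon>2 \<ge> measure P {(x, y1, y2) \<in> space P.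
               ln (\<beta>2 x y1 powr (- \<nu>1 / (1 + \<nu>1)) / \<beta>1 x) - lam1 / (1 + \<nu>1) * d1 - lam2 * d2
                 \<ge> ln (real M2) + \<gamma>2} - exp (- \<gamma>2)"
  proof (rule bound_lemma[OF spP])
    show "{(x, y1, y2) \<in> space P. ln (\<beta>2 x y1 powr (- \<nu>1 / (1 + \<nu>1)) / \<beta>1 x) - lam1 / (1 + \<nu>1) * d1 - lam2 * d2
                 \<ge> ln (real M2) + \<gamma>2} \<in> sets P"
    proof -
      have "{(x, y1, y2) \<in> space S. ln (\<beta>2 x y1 powr (- \<nu>1 / (1 + \<nu>1)) / \<beta>1 x) - lam1 / (1 + \<nu>1) * d1 - lam2 * d2
                 \<ge> ln (real M2) + \<gamma>2} \<in> sets S" unfolding case_prod_beta' prod.collapse by measurable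
      thus ?thesis by (simp add: setsP spaceP)
    qed
    show "{(x, y1, y2) \<in> space P. \<not> (dist1 x y1 \<le> d1 \<and> dist2 x y2 \<le> d2)} \<in> sets P"
    proof -
      have "{(x, y1, y2) \<in> space S. \<not> (dist1 x y1 \<le> d1 \<and> dist2 x y2 \<le> d2)} \<in> sets S"
        unfolding case_prod_beta' prod.collapse by measurable
      thus ?thesis by (simp add: setsP spaceP)
    qed
    show "h2 \<in> borel_measurable P" using h2S by (simp cong: measurable_cong_sets add: setsP)
    show "measure P {(x, y1, y2) \<in> space P. \<not> (dist1 x y1 \<le> d1 \<and> dist2 x y2 \<le> d2)} \<le> \<epsilon>2" by (rule eps2)
    show "exp (- \<gamma>2) \<ge> 0" by simp
    have "ennreal (exp (- \<gamma>2) / real M2) * (\<integral>\<^sup>+z. h2 z \<partial>P) \<le> ennreal (exp (- \<gamma>2) / real M2) * of_nat M2"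
      by (rule mult_left_mono[OF int2]) simp
    also have "\<dots> = ennreal (exp (- \<gamma>2))"
      using M2pos by (simp add: ennreal_of_nat_eq_real_of_nat ennreal_mult''[symmetric])
    finally show "ennreal (exp (- \<gamma>2) / real M2) * (\<integral>\<^sup>+z. h2 z \<partial>P) \<le> ennreal (exp (- \<gamma>2))" .
    fix z assume z: "z \<in> space P"
      and zE: "z \<in> {(x, y1, y2) \<in> space P. ln (\<beta>2 x y1 powr (- \<nu>1 / (1 + \<nu>1)) / \<beta>1 x) - lam1 / (1 + \<nu>1) * d1 - lam2 * d2
                 \<ge> ln (real M2) + \<gamma>2}"
      and zA: "z \<notin> {(x, y1, y2) \<in> space P. \<not> (dist1 x y1 \<le> d1 \<and> dist2 x y2 \<le> d2)}"
    obtain x y1 y2 where zz: "z = (x, y1, y2)" by (cases z)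
    have x: "x \<in> space MX" and y1: "y1 \<in> space MY1" using z zz spS[of z] spaceP by auto
    have b: "\<beta>2 x y1 powr (- \<nu>1 / (1 + \<nu>1)) / \<beta>1 x > 0" using \<beta>1_pos[OF x] \<beta>2_pos[OF x y1] by simp
    have E0: "ln (\<beta>2 x y1 powr (- \<nu>1 / (1 + \<nu>1)) / \<beta>1 x) - lam1 / (1 + \<nu>1) * d1 - lam2 * d2 \<ge> ln (real M2) + \<gamma>2"
      using zE zz by simp
    have E: "ln (\<beta>2 x y1 powr (- \<nu>1 / (1 + \<nu>1)) / \<beta>1 x) - (a * d1 + lam2 * d2) \<ge> ln (real M2) + \<gamma>2"
      using E0 unfolding a_def by linarith
    have D1: "dist1 x y1 \<le> d1" and D2: "dist2 x y2 \<le> d2" using zA z zz by auto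
    have st: "a * dist1 x y1 + lam2 * dist2 x y2 \<le> a * d1 + lam2 * d2"
      using mult_left_mono[OF D1 a0] mult_left_mono[OF D2 lam2_nonneg] by linarith
    have nn: "- \<nu>1 / (1 + \<nu>1) = - (\<nu>1 / (1 + \<nu>1))" by (rule minus_divide_left[symmetric])
    have pw: "\<beta>2 x y1 powr (- \<nu>1 / (1 + \<nu>1)) = inverse (\<beta>2 x y1 powr (\<nu>1 / (1 + \<nu>1)))"
      unfolding nn by (rule powr_minus)
    have ee: "- (a * dist1 x y1 + lam2 * dist2 x y2) = - (lam1 / (1 + \<nu>1)) * dist1 x y1 - lam2 * dist2 x y2"
      unfolding a_def by (simp add: algebra_simps)
    have gen: "\<And>E B c :: real. E * (inverse B / c) = E / (c * B)"
      by (simp add: divide_inverse inverse_mult_distrib mult_ac)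
    have "1 \<le> exp (- \<gamma>2) / real M2 * (exp (- (a * dist1 x y1 + lam2 * dist2 x y2)) * (\<beta>2 x y1 powr (- \<nu>1 / (1 + \<nu>1)) / \<beta>1 x))"
      by (rule key_ineq[OF b _ E st]) (use M2pos in simp)
    also have "\<dots> = exp (- \<gamma>2) / real M2 * (exp (- (lam1 / (1 + \<nu>1)) * dist1 x y1 - lam2 * dist2 x y2)
                   / (\<beta>1 x * \<beta>2 x y1 powr (\<nu>1 / (1 + \<nu>1))))"
      unfolding pw ee gen ..
    finally have r: "1 \<le> \<dots>" .
    have "ennreal 1 \<le> ennreal (exp (- \<gamma>2) / real M2 * (exp (- (lam1 / (1 + \<nu>1)) * dist1 x y1 - lam2 * dist2 x y2)
                   / (\<beta>1 x * \<beta>2 x y1 powr (\<nu>1 / (1 + \<nu>1)))))" by (rule ennreal_leI[OF r])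
    thus "1 \<le> ennreal (exp (- \<gamma>2) / real M2) * h2 z"
      using b \<beta>1_pos[OF x] \<beta>2_pos[OF x y1] by (simp add: zz h2_def ennreal_mult''[symmetric])
  qed
  show ?thesis using c1 c2 unfolding P_def by simp
qed


end
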